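(* For every $r$-configuration $F$ of $U$ and $V$, $\phi(\Phi(F))=F$. In particular, $\Phi$ is injective on $r$-configurations.
   Context: $n,r\ge1$, $m=rn$. $U=\{u_1\prec\cdots\prec u_n\}$, $V=\{v_1\prec\cdots\prec v_n\}$; $\overline U=U\times[r]$, $\overline V=V\times[r]$ ordered lexicographically (write $u^s$ for $(u,s)$). An $r$-configuration is a bijection between $\overline U$ and $\overline V$; a quasi configuration is a partial matching. Pairs $(\bar u,\bar v),(\bar u',\bar v')$ are noncrossing if ($\bar u\prec\bar u'$ and $\bar v\prec\bar v'$) or ($\bar u'\prec\bar u$ and $\bar v'\prec\bar v$). For an $r$-configuration $F$: $a_{\bar u}$ is the maximum size of a set of pairwise noncrossing pairs of $F$ containing the pair $(\bar u,\bar v')\in F$ at $\bar u$, all of whose pairs $(x,y)$ satisfy $x\preceq\bar u$, $y\preceq\bar v'$; $b_{\bar v}$ is defined symmetrically; $\Phi(F)=a_{u_1^1}\cdots a_{u_n^r}|b_{v_1^1}\cdots b_{v_n^r}$, the walk with steps $e_{a_{\bar u}}$ ($\bar u$ increasing) then $-e_{b_{\bar v}}$ ($\bar v$ increasing). For a walk $w=a_{u_1^1}\cdots a_{u_n^r}|b_{v_1^1}\cdots b_{v_n^r}$, $A_k(w)=\{\bar u:a_{\bar u}=k\}$, $B_k(w)=\{\bar v:b_{\bar v}=k\}$; connecting equal-size ordered sets $A,B$ in a crossing way means pairing the $i$-th smallest of $A$ with the $i$-th largest of $B$; $\phi(w)$ is the quasi configuration obtained by, for each $k$: if $|A_k(w)|\ge|B_k(w)|$,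 connecting the $|B_k(w)|$ smallest elements of $A_k(w)$ with $B_k(w)$ in a crossing way, otherwise connecting $A_k(w)$ with the $|A_k(w)|$ largest elements of $B_k(w)$ in a crossing way. *)

theory Defs
  imports Main "HOL-Library.Product_Lexorder"
begin

text \<open>Elements of \<open>U\<times>[r]\<close> (resp. \<open>V\<times>[r]\<close>) are encoded as pairs \<open>(i,s)\<close>
  with \<open>1 \<le> i \<le> n\<close>, \<open>1 \<le> s \<le> r\<close>, standing for \<open>u_i^s\<close> (resp. \<open>v_i^s\<close>);
  the order on pairs is the lexicographic one (Product_Lexorder).\<close>

type_synonym elem = "nat \<times> nat"
type_synonym pairing = "(elem \<times> elem) set"
type_synonym walk = "(elem \<Rightarrow> nat) \<times> (elem \<Rightarrow> nat)"

definition barset :: "nat \<Rightarrow> nat \<Rightarrow> elem set" where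
  "barset n r = {1..n} \<times> {1..r}"

definition is_config :: "nat \<Rightarrow> nat \<Rightarrow> pairing \<Rightarrow> bool" where
  "is_config n r F \<longleftrightarrow> F \<subseteq> barset n r \<times> barset n r
     \<and> (\<forall>u\<in>barset n r. \<exists>!v. (u, v) \<in> F)
     \<and> (\<forall>v\<in>barset n r. \<exists>!u. (u, v) \<in> F)"

definition noncrossing :: "elem \<times> elem \<Rightarrow> elem \<times> elem \<Rightarrow> bool" where
  "noncrossing p q \<longleftrightarrow>
     (fst p < fst q \<and> snd p < snd q) \<or> (fst q < fst p \<and> snd q < snd p)"

definition pw_noncrossing :: "pairing \<Rightarrow> bool" where
  "pw_noncrossing S \<longleftrightarrow> (\<forall>p\<in>S. \<forall>q\<in>S. p \<noteq> q \<longrightarrow> noncrossing p q)"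

definition a_val :: "pairing \<Rightarrow> elem \<Rightarrow> nat" where
  "a_val F u = Max {card S | S v'. (u, v') \<in> F \<and> S \<subseteq> F \<and> (u, v') \<in> S
      \<and> pw_noncrossing S \<and> (\<forall>(x, y)\<in>S. x \<le> u \<and> y \<le> v')}"

definition b_val :: "pairing \<Rightarrow> elem \<Rightarrow> nat" where
  "b_val F v = Max {card S | S u'. (u', v) \<in> F \<and> S \<subseteq> F \<and> (u', v) \<in> S
      \<and> pw_noncrossing S \<and> (\<forall>(x, y)\<in>S. x \<le> u' \<and> y \<le> v)}"

text \<open>\<open>\<Phi>(F)\<close>: the walk \<open>a_{u_1^1}\<dots>a_{u_n^r} | b_{v_1^1}\<dots>b_{v_n^r}\<close>, recorded as
  the pair of label functions (the step sequence is determined by them and the order).\<close>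
definition Phi :: "pairing \<Rightarrow> walk" where
  "Phi F = (a_val F, b_val F)"

definition A_set :: "nat \<Rightarrow> nat \<Rightarrow> walk \<Rightarrow> nat \<Rightarrow> elem set" where
  "A_set n r w k = {u \<in> barset n r. fst w u = k}"

definition B_set :: "nat \<Rightarrow> nat \<Rightarrow> walk \<Rightarrow> nat \<Rightarrow> elem set" where
  "B_set n r w k = {v \<in> barset n r. snd w v = k}"

definition connect_crossing :: "elem set \<Rightarrow> elem set \<Rightarrow> pairing" where
  "connect_crossing A B = set (zip (sorted_list_of_set A) (rev (sorted_list_of_set B)))"

definition smallest :: "nat \<Rightarrow> elem set \<Rightarrow> elem set" where
  "smallest k A = set (take k (sorted_list_of_set A))"

definition largest :: "nat \<Rightarrow> elem set \<Rightarrow> elem set" where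
  "largest k A = set (drop (card A - k) (sorted_list_of_set A))"

definition phi :: "nat \<Rightarrow> nat \<Rightarrow> walk \<Rightarrow> pairing" where
  "phi n r w = (\<Union>k. let A = A_set n r w k; B = B_set n r w k in
      if card A \<ge> card B then connect_crossing (smallest (card B) A) B
      else connect_crossing A (largest (card A) B))"

end

theory Submission
  imports Defs
begin

definition MM :: "pairing \<Rightarrow> elem \<times> elem \<Rightarrow> nat" where
  "MM F p = Max {card S | S. S \<subseteq> F \<and> p \<in> S \<and> pw_noncrossing S
      \<and> (\<forall>(x, y)\<in>S. x \<le> fst p \<and> y \<le> snd p)}"

lemma MM_fin:
  assumes "finite F"
  shows "finite {card S | S. S \<subseteq> F \<and> p \<in> S \<and> pw_noncrossing S
      \<and> (\<forall>(x, y)\<in>S. x \<le> fst p \<and> y \<le> snd p)}"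
proof -
  have "{card S | S. S \<subseteq> F \<and> p \<in> S \<and> pw_noncrossing S
      \<and> (\<forall>(x, y)\<in>S. x \<le> fst p \<and> y \<le> snd p)} \<subseteq> card ` Pow F" by auto
  then show ?thesis using assms finite_subset by blast
qed

lemma MM_mono:
  assumes fin: "finite F" and p: "p \<in> F" and q: "q \<in> F"
    and lt1: "fst p < fst q" and lt2: "snd p < snd q"
  shows "MM F p < MM F q"
proof -
  let ?P = "\<lambda>p. {card S | S. S \<subseteq> F \<and> p \<in> S \<and> pw_noncrossing S
      \<and> (\<forall>(x, y)\<in>S. x \<le> fst p \<and> y \<le> snd p)}"
  have ne: "?P p \<noteq> {}"
  proof -
    have "card {p} \<in> ?P p" using p
      by (intro CollectI exI[of _ "{p}"]) (auto simp: pw_noncrossing_def)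
    then show ?thesis by blast
  qed
  have "MM F p \<in> ?P p" unfolding MM_def using Max_in[OF MM_fin[OF fin] ne] .
  then obtain S where S: "MM F p = card S" "S \<subseteq> F" "p \<in> S" "pw_noncrossing S"
     "\<forall>(x, y)\<in>S. x \<le> fst p \<and> y \<le> snd p" by blast
  have finS: "finite S" using S(2) fin finite_subset by blast
  have qS: "q \<notin> S"
  proof
    assume "q \<in> S"
    then have "fst q \<le> fst p" using S(5) by (auto simp: case_prod_unfold)
    then show False using lt1 by simp
  qed
  have "card (insert q S) \<in> ?P q"
  proof (intro CollectI exI[of _ "insert q S"] conjI)
    show "insert q S \<subseteq> F" using S(2) q by blast
    show "pw_noncrossing (insert q S)"
      unfolding pw_noncrossing_def
    proof (intro ballI impI)
      fix a b assume a: "a \<in> insert q S" and b: "b \<in> insert q S" and ab: "a \<noteq> b"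
      have lq: "fst x < fst q \<and> snd x < snd q" if "x \<in> S" for x
      proof -
        have "fst x \<le> fst p \<and> snd x \<le> snd p" using S(5) that by (auto simp: case_prod_unfold)
        then show ?thesis using lt1 lt2 by (meson le_less_trans)
      qed
      show "noncrossing a b"
      proof (cases "a = q")
        case True
        then have "b \<in> S" using b ab by auto
        then show ?thesis using lq True unfolding noncrossing_def by simp
      next
        case False
        then have aS: "a \<in> S" using a by auto
        show ?thesis
        proof (cases "b = q")
          case True then show ?thesis using lq aS unfolding noncrossing_def by simp
        next
          case False then have "b \<in> S" using b by auto
          then show ?thesis using S(4) aS ab unfolding pw_noncrossing_def by blast
        qed
      qed
    qed
    show "\<forall>(x, y)\<in>insert q S. x \<le> fst q \<and> y \<le> snd q"
    proof (intro ballI)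
      fix z assume z: "z \<in> insert q S"
      show "case z of (x, y) \<Rightarrow> x \<le> fst q \<and> y \<le> snd q"
      proof (cases "z = q")
        case True then show ?thesis by (simp add: case_prod_unfold)
      next
        case False
        then have "z \<in> S" using z by simp
        then have "fst z \<le> fst p \<and> snd z \<le> snd p" using S(5) by (auto simp: case_prod_unfold)
        then have "fst z \<le> fst q \<and> snd z \<le> snd q" using lt1 lt2
          by (meson less_imp_le order_trans)
        then show ?thesis by (simp add: case_prod_unfold)
      qed
    qed
  qed auto
  then have "card (insert q S) \<le> MM F q" unfolding MM_def
    using Max_ge[OF MM_fin[OF fin]] by blast
  then show ?thesis using S(1) finS qS by simp
qed

lemma crossing_lemma:
  fixes A :: "elem set"
  assumes fin: "finite A" and anti: "\<And>u u'. u \<in> A \<Longrightarrow> u' \<in> A \<Longrightarrow> u < u' \<Longrightarrow> g u' < g u"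
  shows "connect_crossing A (g ` A) = (\<lambda>u. (u, g u)) ` A"
proof -
  let ?xs = "sorted_list_of_set A"
  have sx: "sorted_wrt (<) ?xs" using fin by simp
  have "sorted_wrt (\<lambda>x y. g y < g x) ?xs"
    using sorted_wrt_mono_rel[OF _ sx, of "\<lambda>x y. g y < g x"] anti fin by auto
  then have c1: "sorted_wrt (<) (rev (map g ?xs))" by (simp add: sorted_wrt_rev sorted_wrt_map)
  have c2: "set (rev (map g ?xs)) = g ` A" using fin by simp
  have c3: "length (rev (map g ?xs)) = card (g ` A)"
  proof -
    have "distinct (rev (map g ?xs))" using c1 strict_sorted_iff by blast
    then show ?thesis using c2 distinct_card by fastforce
  qed
  have "sorted_list_of_set (g ` A) = rev (map g ?xs)"
    using sorted_list_of_set_unique[of "g ` A" "rev (map g ?xs)"] fin c1 c2 c3 by blast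
  then have "connect_crossing A (g ` A) = set (zip ?xs (map g ?xs))"
    unfolding connect_crossing_def by simp
  also have "zip ?xs (map g ?xs) = map (\<lambda>u. (u, g u)) ?xs"
    by (induct ("?xs")) auto
  finally show ?thesis using fin by simp
qed

lemma phi_Phi:
  assumes cf: "is_config n r F"
  shows "phi n r (Phi F) = F"
proof -
  define X where "X = barset n r"
  have finX: "finite X" unfolding X_def barset_def by simp
  have FX: "F \<subseteq> X \<times> X" and ex1: "\<And>u. u \<in> X \<Longrightarrow> \<exists>!v. (u, v) \<in> F"
    and ex2: "\<And>v. v \<in> X \<Longrightarrow> \<exists>!u. (u, v) \<in> F"
    using cf unfolding is_config_def X_def by auto
  have finF: "finite F" using FX finX finite_subset by blast
  define f where "f u = (THE v. (u, v) \<in> F)" for u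
  have fF: "(u, f u) \<in> F" if "u \<in> X" for u
    unfolding f_def using theI'[OF ex1[OF that]] .
  have Ff: "u \<in> X \<and> v = f u" if "(u, v) \<in> F" for u v
  proof -
    have u: "u \<in> X" using FX that by auto
    then show ?thesis using ex1[OF u] fF[OF u] that by blast
  qed
  have fX: "f u \<in> X" if "u \<in> X" for u using FX fF[OF that] by auto
  have finj: "inj_on f X"
  proof (rule inj_onI)
    fix u u' assume u: "u \<in> X" and u': "u' \<in> X" and e: "f u = f u'"
    show "u = u'" using ex2[OF fX[OF u]] fF[OF u] fF[OF u'] e by metis
  qed
  have Fim: "F = (\<lambda>u. (u, f u)) ` X"
  proof
    show "F \<subseteq> (\<lambda>u. (u, f u)) ` X"
    proof (rule subsetI)
      fix z assume z: "z \<in> F"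
      obtain u v where zz: "z = (u, v)" by (cases z)
      then have "u \<in> X" "v = f u" using Ff z by auto
      then show "z \<in> (\<lambda>u. (u, f u)) ` X" using zz by blast
    qed
    show "(\<lambda>u. (u, f u)) ` X \<subseteq> F" using fF by blast
  qed
  define L where "L u = MM F (u, f u)" for u
  have aL: "a_val F u = L u" if u: "u \<in> X" for u
  proof -
    have "{card S | S v'. (u, v') \<in> F \<and> S \<subseteq> F \<and> (u, v') \<in> S
      \<and> pw_noncrossing S \<and> (\<forall>(x, y)\<in>S. x \<le> u \<and> y \<le> v')}
      = {card S | S. S \<subseteq> F \<and> (u, f u) \<in> S \<and> pw_noncrossing S
      \<and> (\<forall>(x, y)\<in>S. x \<le> fst (u, f u) \<and> y \<le> snd (u, f u))}"
    proof -
      have H: "(u, v') \<in> F \<longleftrightarrow> v' = f u" for v' using Ff fF[OF u] by blast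
      show ?thesis by (simp only: H fst_conv snd_conv) simp
    qed
    then show ?thesis unfolding a_val_def L_def MM_def by simp
  qed
  have bL: "b_val F (f u) = L u" if u: "u \<in> X" for u
  proof -
    have "{card S | S u'. (u', f u) \<in> F \<and> S \<subseteq> F \<and> (u', f u) \<in> S
      \<and> pw_noncrossing S \<and> (\<forall>(x, y)\<in>S. x \<le> u' \<and> y \<le> f u)}
      = {card S | S. S \<subseteq> F \<and> (u, f u) \<in> S \<and> pw_noncrossing S
      \<and> (\<forall>(x, y)\<in>S. x \<le> fst (u, f u) \<and> y \<le> snd (u, f u))}"
    proof -
      have H2: "(u', f u) \<in> F \<longleftrightarrow> u' = u" for u'
        using Ff fF[OF u] finj u by (metis inj_onD)
      show ?thesis by (simp only: H2 fst_conv snd_conv) simp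
    qed
    then show ?thesis unfolding b_val_def L_def MM_def by simp
  qed
  have fsurj: "f ` X = X"
  proof
    show "f ` X \<subseteq> X" using fX by auto
    show "X \<subseteq> f ` X"
    proof
      fix v assume v: "v \<in> X"
      then obtain u where "(u, v) \<in> F" using ex2 by blast
      then show "v \<in> f ` X" using Ff by blast
    qed
  qed
  have termk: "(let A = A_set n r (Phi F) k; B = B_set n r (Phi F) k in
      if card A \<ge> card B then connect_crossing (smallest (card B) A) B
      else connect_crossing A (largest (card A) B)) = (\<lambda>u. (u, f u)) ` {u \<in> X. L u = k}"
    for k
  proof -
    define Ak where "Ak = {u \<in> X. L u = k}"
    have finA: "finite Ak" unfolding Ak_def using finX by simp
    have A: "A_set n r (Phi F) k = Ak"
      unfolding A_set_def Phi_def Ak_def X_def[symmetric] using aL by auto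
    have B: "B_set n r (Phi F) k = f ` Ak"
    proof -
      have "B_set n r (Phi F) k = {v \<in> X. b_val F v = k}"
        unfolding B_set_def Phi_def X_def by simp
      also have "\<dots> = f ` Ak"
      proof
        show "{v \<in> X. b_val F v = k} \<subseteq> f ` Ak"
        proof
          fix v assume vv: "v \<in> {v \<in> X. b_val F v = k}"
          then have "v \<in> f ` X" using fsurj by simp
          then obtain u where u: "u \<in> X" "v = f u" by blast
          have bk: "b_val F v = k" using vv by simp
          have "L u = k" using bL[OF u(1)] bk u(2) by simp
          then show "v \<in> f ` Ak" unfolding Ak_def using u by blast
        qed
        show "f ` Ak \<subseteq> {v \<in> X. b_val F v = k}"
          unfolding Ak_def using bL fX by auto
      qed
      finally show ?thesis .
    qed
    have AkX: "Ak \<subseteq> X" unfolding Ak_def by blast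
    have injA: "inj_on f Ak" by (rule inj_on_subset[OF finj AkX])
    have cB: "card (f ` Ak) = card Ak" by (rule card_image[OF injA])
    have sm: "smallest (card Ak) Ak = Ak"
      unfolding smallest_def using finA by simp
    have anti: "f u' < f u" if h: "u \<in> Ak" "u' \<in> Ak" "u < u'" for u u'
    proof (rule ccontr)
      assume "\<not> f u' < f u"
      moreover have "f u' \<noteq> f u"
      proof
        assume "f u' = f u"
        then have "u' = u" using injA h(1,2) by (simp add: inj_on_eq_iff)
        then show False using h(3) by simp
      qed
      ultimately have fl: "f u < f u'" by (simp add: less_le not_less)
      have uX: "u \<in> X" "u' \<in> X" using h(1,2) AkX by auto
      have "L u < L u'" unfolding L_def
        by (rule MM_mono[OF finF fF[OF uX(1)] fF[OF uX(2)]]) (simp_all add: h(3) fl)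
      moreover have "L u = k" "L u' = k" using h(1,2) unfolding Ak_def by auto
      ultimately show False by simp
    qed
    show ?thesis unfolding A B Let_def cB sm Ak_def[symmetric]
      using crossing_lemma[OF finA anti] by simp
  qed
  have "phi n r (Phi F) = (\<Union>k. (\<lambda>u. (u, f u)) ` {u \<in> X. L u = k})"
    unfolding phi_def termk ..
  also have "\<dots> = (\<lambda>u. (u, f u)) ` X"
  proof -
    have "(\<Union>k. {u \<in> X. L u = k}) = X" by blast
    then show ?thesis by (simp only: image_UN[symmetric])
  qed
  finally show ?thesis using Fim by simp
qed

theorem lemma5:
  fixes n r :: nat
  assumes "n \<ge> 1" and "r \<ge> 1"
  shows "(\<forall>F. is_config n r F \<longrightarrow> phi n r (Phi F) = F)
         \<and> inj_on Phi {F. is_config n r F}"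
proof (rule conjI)
  show "\<forall>F. is_config n r F \<longrightarrow> phi n r (Phi F) = F"
  proof (intro allI impI)
    fix F assume "is_config n r F"
    then show "phi n r (Phi F) = F" by (rule phi_Phi)
  qed
  show "inj_on Phi {F. is_config n r F}"
  proof (rule inj_onI)
    fix F G assume hF: "F \<in> {F. is_config n r F}" and hG: "G \<in> {F. is_config n r F}"
      and e: "Phi F = Phi G"
    have "F = phi n r (Phi F)" using hF phi_Phi by simp
    also have "\<dots> = phi n r (Phi G)" using e by simp
    also have "\<dots> = G" using hG phi_Phi by simp
    finally show "F = G" .
  qed
qed

end
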